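(* Let $QF(1)$ be the subgroup of $QF$ consisting of those elements fixing every word that does not begin with the letter $1$. Then $QF(1)\cong QF$, and there is an injective, non-surjective-allowed endomorphism $\theta$ of $QF(1)$ (namely conjugation by $\alpha$) such that $QF$ is isomorphic to the ascending HNN-extension $QF(1)\ast_{\theta,t}=\langle QF(1),t\mid t^{-1}ht=\theta(h),\ h\in QF(1)\rangle$.
   Context: Let $\{0,1\}^*$ be the finite words over $\{0,1\}$, the vertices of the rooted binary tree in which $x$ has children $x0$ and $x1$ (two edge colours). $QV$ is the group of bijections $\tau$ of $\{0,1\}^*$ with $\tau(x0)=\tau(x)0$ and $\tau(x1)=\tau(x)1$ for all but finitely many $x$. Each such $\tau$ induces a homeomorphism $\pi(\tau)$ of $\{0,1\}^{\mathbb N}$ by $\pi(\tau)(\ell\omega)=\tau(\ell)\omega$, for $\ell$ in a finite maximal prefix-antichain $L$ with $\tau(\ell s)=\tau(\ell)s$ for all $\ell\in L$ and words $s$; this gives a homomorphism $\pi$ onto Thompson's group $V$. $F\le V$ is the subgroup of lexicographic-order-preserving elements and $QF=\pi^{-1}(F)$. The element $\alpha\in QF$ is the bijection with $\alpha(\varepsilon)=0$, $\alpha(1)=\varepsilon$, $\alpha(0s)=00s$, $\alpha(10s)=01s$, $\alpha(11s)=1s$ for all words $s$ ($\varepsilon$ the empty word). An HNN-extension is ascending if $\theta$ is injective. *)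

theory Defs
  imports "HOL-Algebra.Algebra"
begin

text \<open>Words over {0,1} are bool lists, with 0 = False and 1 = True.
  Points of Cantor space {0,1}^N are functions nat => bool.\<close>

definition QV :: "(bool list \<Rightarrow> bool list) set" where
  "QV = {\<tau>. bij \<tau> \<and> finite {x. \<exists>b. \<tau> (x @ [b]) \<noteq> \<tau> x @ [b]}}"

definition prepend :: "bool list \<Rightarrow> (nat \<Rightarrow> bool) \<Rightarrow> (nat \<Rightarrow> bool)" where
  "prepend l \<omega> = (\<lambda>i. if i < length l then l ! i else \<omega> (i - length l))"

text \<open>pi(tau)(l omega) = tau(l) omega whenever tau(l s) = tau(l) s for all words s
  (this value does not depend on the choice of the antichain L).\<close>
definition pi_map :: "(bool list \<Rightarrow> bool list) \<Rightarrow> (nat \<Rightarrow> bool) \<Rightarrow> (nat \<Rightarrow> bool)" where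
  "pi_map \<tau> \<omega> = (THE \<eta>. \<exists>l \<omega>'. \<omega> = prepend l \<omega>' \<and> (\<forall>s. \<tau> (l @ s) = \<tau> l @ s)
                         \<and> \<eta> = prepend (\<tau> l) \<omega>')"

definition lex_less :: "(nat \<Rightarrow> bool) \<Rightarrow> (nat \<Rightarrow> bool) \<Rightarrow> bool" where
  "lex_less \<omega> \<eta> \<longleftrightarrow> (\<exists>n. (\<forall>i<n. \<omega> i = \<eta> i) \<and> \<not> \<omega> n \<and> \<eta> n)"

definition QF :: "(bool list \<Rightarrow> bool list) set" where
  "QF = {\<tau> \<in> QV. \<forall>\<omega> \<eta>. lex_less \<omega> \<eta> \<longrightarrow> lex_less (pi_map \<tau> \<omega>) (pi_map \<tau> \<eta>)}"

definition QF1 :: "(bool list \<Rightarrow> bool list) set" where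
  "QF1 = {\<tau> \<in> QF. \<forall>w. (w = [] \<or> hd w = False) \<longrightarrow> \<tau> w = w}"

definition perm_grp :: "(bool list \<Rightarrow> bool list) set \<Rightarrow> (bool list \<Rightarrow> bool list) monoid" where
  "perm_grp S = \<lparr>carrier = S, monoid.mult = (\<circ>), one = id\<rparr>"

fun alpha :: "bool list \<Rightarrow> bool list" where
  "alpha [] = [False]"
| "alpha [True] = []"
| "alpha (False # s) = False # False # s"
| "alpha (True # False # s) = False # True # s"
| "alpha (True # True # s) = True # s"

definition theta :: "(bool list \<Rightarrow> bool list) \<Rightarrow> (bool list \<Rightarrow> bool list)" where
  "theta h = inv_into UNIV alpha \<circ> h \<circ> alpha"

text \<open>Generators: Some h (h in carrier H) and None (the stable letter t).
  A letter (g, b) denotes g if b = False and g^{-1} if b = True.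
  The presented group <H, t | h1 h2 = (h1 h2), t^{-1} h t = theta(h)> is the quotient of the
  monoid of words by the congruence generated by free cancellation and the relators.\<close>

inductive hnn_eq :: "('a, 'm) monoid_scheme \<Rightarrow> ('a \<Rightarrow> 'a)
    \<Rightarrow> ('a option \<times> bool) list \<Rightarrow> ('a option \<times> bool) list \<Rightarrow> bool"
  for H \<theta> where
  refl: "hnn_eq H \<theta> u u"
| sym: "hnn_eq H \<theta> u v \<Longrightarrow> hnn_eq H \<theta> v u"
| trans: "hnn_eq H \<theta> u v \<Longrightarrow> hnn_eq H \<theta> v w \<Longrightarrow> hnn_eq H \<theta> u w"
| cong: "hnn_eq H \<theta> u v \<Longrightarrow> hnn_eq H \<theta> (x @ u @ y) (x @ v @ y)"
| cancel: "hnn_eq H \<theta> [(g, b), (g, \<not> b)] []"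
| mult_rel: "h1 \<in> carrier H \<Longrightarrow> h2 \<in> carrier H \<Longrightarrow>
    hnn_eq H \<theta> [(Some h1, False), (Some h2, False)] [(Some (h1 \<otimes>\<^bsub>H\<^esub> h2), False)]"
| hnn_rel: "h \<in> carrier H \<Longrightarrow>
    hnn_eq H \<theta> [(None, True), (Some h, False), (None, False)] [(Some (\<theta> h), False)]"

definition hnn_words :: "('a, 'm) monoid_scheme \<Rightarrow> ('a option \<times> bool) list set" where
  "hnn_words H = {w. \<forall>(g, b) \<in> set w. g = None \<or> the g \<in> carrier H}"

definition HNN :: "('a, 'm) monoid_scheme \<Rightarrow> ('a \<Rightarrow> 'a)
    \<Rightarrow> (('a option \<times> bool) list set) monoid" where
  "HNN H \<theta> = \<lparr>carrier = {{v. hnn_eq H \<theta> w v} | w. w \<in> hnn_words H},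
              monoid.mult = (\<lambda>A B. {v. \<exists>x\<in>A. \<exists>y\<in>B. hnn_eq H \<theta> (x @ y) v}),
              one = {v. hnn_eq H \<theta> [] v}\<rparr>"

end

theory Submission
  imports Defs
begin


lemma prepend_Nil[simp]: "prepend [] \<omega> = \<omega>"
  by (simp add: prepend_def)

lemma prepend_append: "prepend (a @ b) \<omega> = prepend a (prepend b \<omega>)"
  by (auto simp: prepend_def nth_append fun_eq_iff)

lemma prepend_Cons2[simp]: "prepend (x # y # l) \<omega> = prepend [x] (prepend (y # l) \<omega>)"
  using prepend_append[of "[x]" "y#l" \<omega>] by simp

lemma prepend1_0[simp]: "prepend [b] \<omega> 0 = b"
  by (simp add: prepend_def)

lemma prepend1_Suc[simp]: "prepend [b] \<omega> (Suc i) = \<omega> i"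
  by (simp add: prepend_def)

lemma prepend1_inj[simp]: "prepend [x] \<omega> = prepend [y] \<eta> \<longleftrightarrow> x = y \<and> \<omega> = \<eta>"
proof
  assume h: "prepend [x] \<omega> = prepend [y] \<eta>"
  have "x = y" using fun_cong[OF h, of 0] by simp
  moreover have "\<omega> = \<eta>" using fun_cong[OF h, of "Suc i" for i] by (auto simp: fun_eq_iff)
  ultimately show "x = y \<and> \<omega> = \<eta>" by simp
qed simp

lemma prepend_split: "\<omega> = prepend [\<omega> 0] (\<lambda>i. \<omega> (Suc i))"
  by (auto simp: fun_eq_iff prepend_def)

lemma prepend_Cons: "prepend (x # l) \<omega> = prepend [x] (prepend l \<omega>)"
  using prepend_append[of "[x]" "l" \<omega>] by simp

lemma prepend_eq:
  "length l \<le> length l2 \<Longrightarrow> prepend l \<omega> = prepend l2 \<omega>2 \<Longrightarrow> \<exists>m. l2 = l @ m \<and> \<omega> = prepend m \<omega>2"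
proof (induction l arbitrary: l2)
  case Nil then show ?case by auto
next
  case (Cons x l)
  then obtain y l2' where l2: "l2 = y # l2'" by (cases l2) auto
  from Cons.prems have "x = y" "prepend l \<omega> = prepend l2' \<omega>2" "length l \<le> length l2'"
    by (auto simp: l2 prepend_Cons[of x l] prepend_Cons[of y l2'])
  with Cons.IH show ?case by (auto simp: l2)
qed

lemma lex_less_cons:
  "lex_less (prepend [b] \<omega>) (prepend [c] \<eta>) \<longleftrightarrow> (\<not> b \<and> c) \<or> (b = c \<and> lex_less \<omega> \<eta>)"
proof
  assume "lex_less (prepend [b] \<omega>) (prepend [c] \<eta>)"
  then obtain n where n: "\<forall>i<n. prepend [b] \<omega> i = prepend [c] \<eta> i"
    "\<not> prepend [b] \<omega> n" "prepend [c] \<eta> n" unfolding lex_less_def by blast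
  show "(\<not> b \<and> c) \<or> (b = c \<and> lex_less \<omega> \<eta>)"
  proof (cases n)
    case 0 then show ?thesis using n by simp
  next
    case (Suc m)
    have "b = c" using n(1) Suc by (metis prepend1_0 zero_less_Suc)
    moreover have "lex_less \<omega> \<eta>" unfolding lex_less_def
      using n Suc by (intro exI[of _ m]) auto
    ultimately show ?thesis by simp
  qed
next
  assume "(\<not> b \<and> c) \<or> (b = c \<and> lex_less \<omega> \<eta>)"
  then show "lex_less (prepend [b] \<omega>) (prepend [c] \<eta>)"
  proof
    assume "\<not> b \<and> c" then show ?thesis unfolding lex_less_def by (intro exI[of _ 0]) auto
  next
    assume h: "b = c \<and> lex_less \<omega> \<eta>"
    then obtain n where n: "\<forall>i<n. \<omega> i = \<eta> i" "\<not> \<omega> n" "\<eta> n" unfolding lex_less_def by blast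
    show ?thesis unfolding lex_less_def
      using n h by (intro exI[of _ "Suc n"]) (auto simp: less_Suc_eq_0_disj)
  qed
qed

lemma lex_less_prepend: "lex_less (prepend l \<omega>) (prepend l \<eta>) \<longleftrightarrow> lex_less \<omega> \<eta>"
proof (induction l)
  case (Cons x l) then show ?case by (simp only: prepend_Cons[of x l] lex_less_cons) simp
qed simp

lemma lex_irrefl: "\<not> lex_less \<omega> \<omega>"
  unfolding lex_less_def by auto

lemma lex_asym: "lex_less \<omega> \<eta> \<Longrightarrow> \<not> lex_less \<eta> \<omega>"
  unfolding lex_less_def by (metis linorder_neqE_nat)

lemma lex_total: "\<omega> \<noteq> \<eta> \<Longrightarrow> lex_less \<omega> \<eta> \<or> lex_less \<eta> \<omega>"
proof -
  assume "\<omega> \<noteq> \<eta>"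
  then have "\<exists>n. \<omega> n \<noteq> \<eta> n" by (auto simp: fun_eq_iff)
  define n where "n = (LEAST n. \<omega> n \<noteq> \<eta> n)"
  have d: "\<omega> n \<noteq> \<eta> n" unfolding n_def by (rule LeastI_ex) fact
  have e: "\<forall>i<n. \<omega> i = \<eta> i" unfolding n_def using not_less_Least by blast
  show ?thesis unfolding lex_less_def using d e by (cases "\<omega> n") auto
qed

definition pref :: "nat \<Rightarrow> (nat \<Rightarrow> bool) \<Rightarrow> bool list" where
  "pref n \<omega> = map \<omega> [0..<n]"
definition sfx :: "nat \<Rightarrow> (nat \<Rightarrow> bool) \<Rightarrow> (nat \<Rightarrow> bool)" where
  "sfx n \<omega> = (\<lambda>i. \<omega> (i + n))"

lemma pref_sfx: "prepend (pref n \<omega>) (sfx n \<omega>) = \<omega>"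
  by (auto simp: fun_eq_iff prepend_def pref_def sfx_def)

lemma length_pref[simp]: "length (pref n \<omega>) = n"
  by (simp add: pref_def)

definition rigid :: "(bool list \<Rightarrow> bool list) \<Rightarrow> bool list \<Rightarrow> bool" where
  "rigid \<tau> l \<longleftrightarrow> (\<forall>s. \<tau> (l @ s) = \<tau> l @ s)"

lemma QV_bound:
  assumes "\<tau> \<in> QV" shows "\<exists>N. \<forall>l. N \<le> length l \<longrightarrow> rigid \<tau> l"
proof -
  let ?E = "{x. \<exists>b. \<tau> (x @ [b]) \<noteq> \<tau> x @ [b]}"
  have "finite ?E" using assms by (simp add: QV_def)
  then have "finite (length ` ?E)" by simp
  then obtain N where N: "\<forall>k \<in> length ` ?E. k < N"
    by (meson finite_nat_set_iff_bounded)
  have "rigid \<tau> l" if "N \<le> length l" for l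
    unfolding rigid_def
  proof
    fix s show "\<tau> (l @ s) = \<tau> l @ s"
    proof (induction s rule: rev_induct)
      case Nil then show ?case by simp
    next
      case (snoc b s)
      have "l @ s \<notin> ?E"
      proof
        assume "l @ s \<in> ?E" then have "length (l @ s) < N" using N by blast
        then show False using that by simp
      qed
      then have "\<tau> ((l @ s) @ [b]) = \<tau> (l @ s) @ [b]" by blast
      then show ?case using snoc by simp
    qed
  qed
  then show ?thesis by blast
qed

lemma pi_map_rigid:
  assumes r: "rigid \<tau> l" shows "pi_map \<tau> (prepend l \<omega>) = prepend (\<tau> l) \<omega>"
  unfolding pi_map_def
proof (rule the_equality)
  show "\<exists>l' \<omega>'. prepend l \<omega> = prepend l' \<omega>' \<and> (\<forall>s. \<tau> (l' @ s) = \<tau> l' @ s) \<and>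
          prepend (\<tau> l) \<omega> = prepend (\<tau> l') \<omega>'"
    using r unfolding rigid_def by blast
next
  fix \<eta> assume "\<exists>l' \<omega>'. prepend l \<omega> = prepend l' \<omega>' \<and> (\<forall>s. \<tau> (l' @ s) = \<tau> l' @ s) \<and>
          \<eta> = prepend (\<tau> l') \<omega>'"
  then obtain l' \<omega>' where h: "prepend l \<omega> = prepend l' \<omega>'" "\<forall>s. \<tau> (l' @ s) = \<tau> l' @ s"
     "\<eta> = prepend (\<tau> l') \<omega>'" by blast
  show "\<eta> = prepend (\<tau> l) \<omega>"
  proof (cases "length l \<le> length l'")
    case True
    then obtain m where "l' = l @ m" "\<omega> = prepend m \<omega>'" using prepend_eq h(1) by blast
    then show ?thesis using h r by (simp add: rigid_def prepend_append)
  next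
    case False
    then obtain m where "l = l' @ m" "\<omega>' = prepend m \<omega>" using prepend_eq h(1)[symmetric]
      by (metis nle_le)
    then show ?thesis using h by (simp add: prepend_append)
  qed
qed

lemma QV_rigid_prefix:
  assumes "\<tau> \<in> QV" shows "\<exists>l \<omega>'. \<omega> = prepend l \<omega>' \<and> rigid \<tau> l"
proof -
  obtain N where "\<forall>l. N \<le> length l \<longrightarrow> rigid \<tau> l" using QV_bound[OF assms] by blast
  then show ?thesis using pref_sfx[of N \<omega>] by (metis length_pref order_refl)
qed



definition exc :: "(bool list \<Rightarrow> bool list) \<Rightarrow> bool list set" where
  "exc \<tau> = {x. \<exists>b. \<tau> (x @ [b]) \<noteq> \<tau> x @ [b]}"

lemma QV_iff: "\<tau> \<in> QV \<longleftrightarrow> bij \<tau> \<and> finite (exc \<tau>)"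
  by (simp add: QV_def exc_def)

lemma QV_comp: assumes "\<sigma> \<in> QV" "\<tau> \<in> QV" shows "\<sigma> \<circ> \<tau> \<in> QV"
proof -
  have b: "bij \<sigma>" "bij \<tau>" "finite (exc \<sigma>)" "finite (exc \<tau>)" using assms by (auto simp: QV_iff)
  have "exc (\<sigma> \<circ> \<tau>) \<subseteq> exc \<tau> \<union> \<tau> -` exc \<sigma>"
    by (auto simp: exc_def)
  moreover have "finite (\<tau> -` exc \<sigma>)"
    using b by (intro finite_vimageI) (auto simp: bij_def)
  ultimately have "finite (exc (\<sigma> \<circ> \<tau>))" using b finite_subset by blast
  then show ?thesis using b by (simp add: QV_iff bij_comp)
qed

lemma QV_inv: assumes "\<tau> \<in> QV" shows "inv_into UNIV \<tau> \<in> QV"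
proof -
  have b: "bij \<tau>" "finite (exc \<tau>)" using assms by (auto simp: QV_iff)
  have "exc (inv_into UNIV \<tau>) \<subseteq> \<tau> ` exc \<tau>"
  proof
    fix x assume x: "x \<in> exc (inv_into UNIV \<tau>)"
    show "x \<in> \<tau> ` exc \<tau>"
    proof (rule ccontr)
      assume n: "x \<notin> \<tau> ` exc \<tau>"
      let ?y = "inv_into UNIV \<tau> x"
      have tx: "\<tau> ?y = x" using b by (simp add: bij_def surj_f_inv_f)
      then have "?y \<notin> exc \<tau>" using n by force
      then have "\<tau> (?y @ [b]) = x @ [b]" for b using tx by (auto simp: exc_def)
      then have "inv_into UNIV \<tau> (x @ [b]) = ?y @ [b]" for b using b
        by (metis bij_def inv_f_f)
      then show False using x by (auto simp: exc_def)
    qed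
  qed
  then have "finite (exc (inv_into UNIV \<tau>))" using b finite_subset by blast
  then show ?thesis using b by (simp add: QV_iff bij_imp_bij_inv)
qed

lemma QV_id: "id \<in> QV"
  by (simp add: QV_iff exc_def)

lemma rigid_id: "rigid id l" by (simp add: rigid_def)

lemma pi_id: "pi_map id \<omega> = \<omega>"
  using pi_map_rigid[OF rigid_id, of "[]" \<omega>] by simp

lemma pi_comp:
  assumes "\<sigma> \<in> QV" "\<tau> \<in> QV" shows "pi_map (\<sigma> \<circ> \<tau>) \<omega> = pi_map \<sigma> (pi_map \<tau> \<omega>)"
proof -
  obtain N1 where N1: "\<forall>l. N1 \<le> length l \<longrightarrow> rigid \<tau> l" using QV_bound[OF assms(2)] by blast
  obtain N2 where N2: "\<forall>l. N2 \<le> length l \<longrightarrow> rigid \<sigma> l" using QV_bound[OF assms(1)] by blast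
  define l where "l = pref (N1 + N2) \<omega>"
  define \<omega>' where "\<omega>' = sfx (N1 + N2) \<omega>"
  have om: "\<omega> = prepend l \<omega>'" using pref_sfx unfolding l_def \<omega>'_def by metis
  have ll: "length l = N1 + N2" by (simp add: l_def)
  have "rigid \<tau> (take N1 l)" using N1 ll by simp
  then have tl: "\<tau> l = \<tau> (take N1 l) @ drop N1 l" unfolding rigid_def
    by (metis append_take_drop_id)
  have rt: "rigid \<tau> l" using N1 ll by simp
  have "N2 \<le> length (\<tau> l)" using tl ll by simp
  then have rs: "rigid \<sigma> (\<tau> l)" using N2 by simp
  have rst: "rigid (\<sigma> \<circ> \<tau>) l" using rt rs by (simp add: rigid_def)
  show ?thesis unfolding om
    by (simp add: pi_map_rigid[OF rst] pi_map_rigid[OF rt] pi_map_rigid[OF rs])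
qed

lemma QF_iff: "\<tau> \<in> QF \<longleftrightarrow> \<tau> \<in> QV \<and> (\<forall>\<omega> \<eta>. lex_less \<omega> \<eta> \<longrightarrow> lex_less (pi_map \<tau> \<omega>) (pi_map \<tau> \<eta>))"
  by (simp add: QF_def)

lemma QF_comp: assumes "\<sigma> \<in> QF" "\<tau> \<in> QF" shows "\<sigma> \<circ> \<tau> \<in> QF"
  using assms by (simp add: QF_iff QV_comp pi_comp)

lemma QF_id: "id \<in> QF"
  by (simp add: QF_iff QV_id pi_id)

lemma QF_inv: assumes "\<tau> \<in> QF" shows "inv_into UNIV \<tau> \<in> QF"
proof -
  have q: "\<tau> \<in> QV" "inv_into UNIV \<tau> \<in> QV" using assms QV_inv by (auto simp: QF_iff)
  have bt: "bij \<tau>" using q by (simp add: QV_iff)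
  have "\<tau> \<circ> inv_into UNIV \<tau> = id" using bt by (simp add: bij_def surj_iff)
  then have pp: "pi_map \<tau> (pi_map (inv_into UNIV \<tau>) \<omega>) = \<omega>" for \<omega>
    using pi_comp[OF q(1) q(2), of \<omega>] by (simp add: pi_id)
  have mono: "lex_less \<omega> \<eta> \<Longrightarrow> lex_less (pi_map \<tau> \<omega>) (pi_map \<tau> \<eta>)" for \<omega> \<eta>
    using assms by (simp add: QF_iff)
  have "lex_less (pi_map (inv_into UNIV \<tau>) \<omega>) (pi_map (inv_into UNIV \<tau>) \<eta>)" if l: "lex_less \<omega> \<eta>" for \<omega> \<eta>
  proof (rule ccontr)
    assume n: "\<not> ?thesis"
    show False
    proof (cases "pi_map (inv_into UNIV \<tau>) \<omega> = pi_map (inv_into UNIV \<tau>) \<eta>")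
      case True
      then have "\<omega> = \<eta>" using pp by metis
      then show False using l lex_irrefl by blast
    next
      case False
      then have "lex_less (pi_map (inv_into UNIV \<tau>) \<eta>) (pi_map (inv_into UNIV \<tau>) \<omega>)" using n lex_total by blast
      then have "lex_less \<eta> \<omega>" using mono pp by metis
      then show False using l lex_asym by blast
    qed
  qed
  then show ?thesis using q by (simp add: QF_iff)
qed



fun ainv :: "bool list \<Rightarrow> bool list" where
  "ainv [] = [True]"
| "ainv [False] = []"
| "ainv (False # False # s) = False # s"
| "ainv (False # True # s) = True # False # s"
| "ainv (True # s) = True # True # s"

lemma alpha_ainv[simp]: "alpha (ainv w) = w"
  by (induction w rule: ainv.induct) auto

lemma ainv_alpha[simp]: "ainv (alpha w) = w"
  by (induction w rule: alpha.induct) auto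

lemma inv_alpha: "inv_into UNIV alpha = ainv"
  by (rule inv_equality) auto

lemma bij_alpha: "bij alpha"
  by (rule bij_betw_byWitness[where f'=ainv]) auto

lemma bij_ainv: "bij ainv"
  by (rule bij_betw_byWitness[where f'=alpha]) auto

lemma exc_alpha: "exc alpha \<subseteq> {[], [True]}"
proof
  fix x assume "x \<in> exc alpha"
  then obtain b where b: "alpha (x @ [b]) \<noteq> alpha x @ [b]" by (auto simp: exc_def)
  show "x \<in> {[], [True]}"
    using b by (cases x rule: alpha.cases) auto
qed

lemma alpha_QV: "alpha \<in> QV"
  using exc_alpha bij_alpha by (simp add: QV_iff finite_subset)

lemma rigid_alpha1: "rigid alpha [False]" by (simp add: rigid_def)
lemma rigid_alpha2: "rigid alpha [True, False]" by (simp add: rigid_def)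
lemma rigid_alpha3: "rigid alpha [True, True]" by (simp add: rigid_def)

lemma pi_alpha1: "pi_map alpha (prepend [False] \<omega>) = prepend [False, False] \<omega>"
  using pi_map_rigid[OF rigid_alpha1] by simp
lemma pi_alpha2: "pi_map alpha (prepend [True, False] \<omega>) = prepend [False, True] \<omega>"
  using pi_map_rigid[OF rigid_alpha2] by simp
lemma pi_alpha3: "pi_map alpha (prepend [True, True] \<omega>) = prepend [True] \<omega>"
  using pi_map_rigid[OF rigid_alpha3] by simp

lemma cantor_cases3:
  obtains \<omega>' where "\<omega> = prepend [False] \<omega>'"
  | \<omega>' where "\<omega> = prepend [True, False] \<omega>'"
  | \<omega>' where "\<omega> = prepend [True, True] \<omega>'"
proof -
  define \<omega>1 where "\<omega>1 = (\<lambda>i. \<omega> (Suc i))"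
  define \<omega>2 where "\<omega>2 = (\<lambda>i. \<omega>1 (Suc i))"
  have e1: "\<omega> = prepend [\<omega> 0] \<omega>1" unfolding \<omega>1_def by (rule prepend_split)
  have e2: "\<omega>1 = prepend [\<omega>1 0] \<omega>2" unfolding \<omega>2_def by (rule prepend_split)
  show ?thesis
  proof (cases "\<omega> 0")
    case False then show ?thesis using e1 that(1) by metis
  next
    case True
    then have "\<omega> = prepend [True, \<omega>1 0] \<omega>2" using e1 e2 by simp
    then show ?thesis using that(2,3) by (cases "\<omega>1 0") auto
  qed
qed

lemma cantor_cases2:
  obtains \<omega>' where "\<omega> = prepend [False] \<omega>'"
  | \<omega>' where "\<omega> = prepend [True] \<omega>'"
  using prepend_split[of \<omega>] by (cases "\<omega> 0") metis+

lemma alpha_QF: "alpha \<in> QF"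
proof -
  have "lex_less (pi_map alpha \<omega>) (pi_map alpha \<eta>)" if l: "lex_less \<omega> \<eta>" for \<omega> \<eta>
    using l
    by (cases \<omega> rule: cantor_cases3; cases \<eta> rule: cantor_cases3; hypsubst_thin;
        simp only: pi_alpha1 pi_alpha2 pi_alpha3; simp add: lex_less_cons)
  then show ?thesis using alpha_QV by (simp add: QF_iff)
qed



lemma ainv_QF: "ainv \<in> QF"
  using QF_inv[OF alpha_QF] by (simp add: inv_alpha)

lemma alpha_pow_QF: "alpha ^^ n \<in> QF"
  by (induction n) (simp_all only: funpow.simps QF_id QF_comp alpha_QF)

lemma ainv_pow_QF: "ainv ^^ n \<in> QF"
  by (induction n) (simp_all only: funpow.simps QF_id QF_comp ainv_QF)

definition non1 :: "bool list \<Rightarrow> bool" where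
  "non1 w \<longleftrightarrow> w = [] \<or> hd w = False"

lemma QF1_iff: "\<tau> \<in> QF1 \<longleftrightarrow> \<tau> \<in> QF \<and> (\<forall>w. non1 w \<longrightarrow> \<tau> w = w)"
  by (simp add: QF1_def non1_def)

lemma non1_simps[simp]: "non1 []" "non1 (False # s)" "\<not> non1 (True # s)"
  by (auto simp: non1_def)

lemma QF1_comp: "\<sigma> \<in> QF1 \<Longrightarrow> \<tau> \<in> QF1 \<Longrightarrow> \<sigma> \<circ> \<tau> \<in> QF1"
  by (simp add: QF1_iff QF_comp)

lemma QF1_id: "id \<in> QF1"
  by (simp add: QF1_iff QF_id)

lemma QF_bij: "\<tau> \<in> QF \<Longrightarrow> bij \<tau>"
  by (simp add: QF_iff QV_iff)

lemma QF1_inv: assumes "\<tau> \<in> QF1" shows "inv_into UNIV \<tau> \<in> QF1"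
proof -
  have b: "bij \<tau>" using assms QF_bij by (simp add: QF1_iff)
  have "inv_into UNIV \<tau> w = w" if "non1 w" for w
    using assms that b by (metis QF1_iff bij_def inv_f_f)
  then show ?thesis using assms QF_inv by (simp add: QF1_iff)
qed

lemma theta_eq: "theta h = ainv \<circ> h \<circ> alpha"
  by (simp add: theta_def inv_alpha)

lemma theta_QF1: assumes "h \<in> QF1" shows "theta h \<in> QF1"
proof -
  have q: "theta h \<in> QF" using assms
    by (simp add: theta_eq QF_comp ainv_QF alpha_QF QF1_iff)
  have "theta h w = w" if "non1 w" for w
  proof (cases w)
    case Nil
    then show ?thesis using assms by (simp add: theta_eq QF1_iff)
  next
    case (Cons b s)
    then have "b = False" using that by (cases b) auto
    then show ?thesis using assms Cons by (simp add: theta_eq QF1_iff)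
  qed
  then show ?thesis using q by (simp add: QF1_iff)
qed

lemma theta_pow_QF1: "h \<in> QF1 \<Longrightarrow> (theta ^^ n) h \<in> QF1"
  by (induction n) (auto simp: theta_QF1)

lemma theta_comp: "theta (f \<circ> g) = theta f \<circ> theta g"
  by (auto simp: theta_eq fun_eq_iff)

lemma theta_inj: "inj theta"
proof (rule injI)
  fix f g assume "theta f = theta g"
  then have "alpha \<circ> theta f \<circ> ainv = alpha \<circ> theta g \<circ> ainv" by simp
  then show "f = g" by (simp add: theta_eq fun_eq_iff)
qed

section \<open>QF1 iso QF\<close>

definition rho :: "(bool list \<Rightarrow> bool list) \<Rightarrow> bool list \<Rightarrow> bool list" where
  "rho f = (\<lambda>s. tl (f (True # s)))"

definition phi :: "(bool list \<Rightarrow> bool list) \<Rightarrow> bool list \<Rightarrow> bool list" where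
  "phi g = (\<lambda>w. case w of [] \<Rightarrow> [] | b # s \<Rightarrow> if b then True # g s else w)"

lemma list_bool_cases:
  obtains "w = []" | s where "w = False # s" | s where "w = True # s"
  by (cases w) auto

lemma phi_simps[simp]: "phi g [] = []" "phi g (False # s) = False # s" "phi g (True # s) = True # g s"
  by (simp_all add: phi_def)

lemma QF1_True: assumes "f \<in> QF1" shows "f (True # s) = True # rho f s"
proof -
  let ?y = "f (True # s)"
  have b: "bij f" using assms QF_bij by (simp add: QF1_iff)
  have "\<not> non1 ?y"
  proof
    assume "non1 ?y"
    then have "f ?y = ?y" using assms by (simp add: QF1_iff)
    then have "?y = True # s" using b by (metis bij_def injD)
    then show False using \<open>non1 ?y\<close> by simp
  qed
  then obtain t where "?y = True # t" by (cases ?y) (auto simp: non1_def)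
  then show ?thesis by (simp add: rho_def)
qed

lemma phi_rho: assumes "f \<in> QF1" shows "phi (rho f) = f"
proof
  fix w show "phi (rho f) w = f w"
  proof (cases w)
    case Nil then show ?thesis using assms by (simp add: QF1_iff)
  next
    case (Cons b s) then show ?thesis using assms QF1_True
      by (cases b) (auto simp: QF1_iff)
  qed
qed

lemma rho_phi[simp]: "rho (phi g) = g"
  by (simp add: rho_def)

lemma phi_comp: "phi (f \<circ> g) = phi f \<circ> phi g"
proof
  fix w show "phi (f \<circ> g) w = (phi f \<circ> phi g) w"
    by (cases w rule: list_bool_cases) auto
qed

lemma phi_id: "phi id = id"
proof
  fix w show "phi id w = id w"
    by (cases w rule: list_bool_cases) auto
qed

lemma phi_QV: assumes "g \<in> QV" shows "phi g \<in> QV"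
proof -
  have b: "bij g" "finite (exc g)" using assms by (auto simp: QV_iff)
  have "g \<circ> inv_into UNIV g = id" "inv_into UNIV g \<circ> g = id"
    using b by (meson bij_is_surj surj_iff, meson bij_is_inj inj_iff)
  then have "phi g \<circ> phi (inv_into UNIV g) = id" "phi (inv_into UNIV g) \<circ> phi g = id"
    by (simp_all add: phi_comp[of g "inv_into UNIV g", symmetric]
        phi_comp[of "inv_into UNIV g" g, symmetric] phi_id)
  then have bp: "bij (phi g)" using o_bij by blast
  have "exc (phi g) \<subseteq> {[]} \<union> Cons True ` exc g"
  proof
    fix x assume "x \<in> exc (phi g)"
    then obtain c where c: "phi g (x @ [c]) \<noteq> phi g x @ [c]" by (auto simp: exc_def)
    show "x \<in> {[]} \<union> Cons True ` exc g"
    proof (cases x rule: list_bool_cases)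
      case (3 s)
      then have "s \<in> exc g" using c by (auto simp: exc_def)
      then show ?thesis using 3 by auto
    qed (use c in auto)
  qed
  then have "finite (exc (phi g))" using b finite_subset by blast
  then show ?thesis using bp by (simp add: QV_iff)
qed

lemma pi_phi_F: "pi_map (phi g) (prepend [False] \<omega>) = prepend [False] \<omega>"
proof -
  have "rigid (phi g) [False]" by (simp add: rigid_def)
  then show ?thesis using pi_map_rigid by fastforce
qed

lemma pi_phi_T: assumes "g \<in> QV"
  shows "pi_map (phi g) (prepend [True] \<omega>) = prepend [True] (pi_map g \<omega>)"
proof -
  obtain l \<omega>' where l: "\<omega> = prepend l \<omega>'" "rigid g l" using QV_rigid_prefix[OF assms] by blast
  have "rigid (phi g) (True # l)" using l(2) by (simp add: rigid_def)
  then have "pi_map (phi g) (prepend (True # l) \<omega>') = prepend (True # g l) \<omega>'"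
    using pi_map_rigid by fastforce
  then show ?thesis using l
    by (simp add: prepend_Cons[of True l] prepend_Cons[of True "g l"] pi_map_rigid[OF l(2)])
qed

lemma phi_QF1: assumes "g \<in> QF" shows "phi g \<in> QF1"
proof -
  have q: "g \<in> QV" using assms by (simp add: QF_iff)
  have m: "lex_less \<omega> \<eta> \<Longrightarrow> lex_less (pi_map g \<omega>) (pi_map g \<eta>)" for \<omega> \<eta>
    using assms by (simp add: QF_iff)
  have "lex_less (pi_map (phi g) \<omega>) (pi_map (phi g) \<eta>)" if l: "lex_less \<omega> \<eta>" for \<omega> \<eta>
    using l
    by (cases \<omega> rule: cantor_cases2; cases \<eta> rule: cantor_cases2)
       (simp_all add: pi_phi_F pi_phi_T[OF q] lex_less_cons m)
  then have "phi g \<in> QF" using phi_QV[OF q] by (simp add: QF_iff)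
  moreover have "phi g w = w" if "non1 w" for w
    using that by (cases w rule: list_bool_cases) auto
  ultimately show ?thesis by (simp add: QF1_iff)
qed

lemma rho_QF: assumes "f \<in> QF1" shows "rho f \<in> QF"
proof -
  have fq: "f \<in> QF" using assms by (simp add: QF1_iff)
  have b: "bij f" "finite (exc f)" using fq by (auto simp: QF_iff QV_iff)
  have fT: "f (True # s) = True # rho f s" for s using QF1_True[OF assms] .
  have inj: "inj (rho f)"
  proof (rule injI)
    fix s s' assume "rho f s = rho f s'"
    then have "f (True # s) = f (True # s')" using fT by simp
    then show "s = s'" using b by (metis bij_def injD list.inject)
  qed
  have surj: "surj (rho f)"
  proof -
    have "t \<in> range (rho f)" for t
    proof -
      obtain y where y: "f y = True # t" using b by (metis bij_def surj_def)
      have "\<not> non1 y"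
      proof
        assume "non1 y" then have "f y = y" using assms by (simp add: QF1_iff)
        then show False using y \<open>non1 y\<close> by (metis non1_simps(3))
      qed
      then obtain s where "y = True # s" by (cases y) (auto simp: non1_def)
      then show ?thesis using y fT by (metis list.inject rangeI)
    qed
    then show ?thesis by blast
  qed
  have "exc (rho f) \<subseteq> Cons True -` exc f"
  proof
    fix s assume "s \<in> exc (rho f)"
    then obtain c where c: "rho f (s @ [c]) \<noteq> rho f s @ [c]" by (auto simp: exc_def)
    have "f (True # s @ [c]) \<noteq> f (True # s) @ [c]"
      using c fT[of s] fT[of "s @ [c]"] by auto
    then show "s \<in> Cons True -` exc f" by (auto simp: exc_def)
  qed
  moreover have "finite (Cons True -` exc f)" using b by (intro finite_vimageI) auto
  ultimately have qv: "rho f \<in> QV" using inj surj finite_subset by (auto simp: QV_iff bij_def)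
  have pp: "pi_map f (prepend [True] \<omega>) = prepend [True] (pi_map (rho f) \<omega>)" for \<omega>
    using pi_phi_T[OF qv] phi_rho[OF assms] by simp
  have m: "lex_less \<omega> \<eta> \<Longrightarrow> lex_less (pi_map f \<omega>) (pi_map f \<eta>)" for \<omega> \<eta>
    using fq by (simp add: QF_iff)
  have "lex_less (pi_map (rho f) \<omega>) (pi_map (rho f) \<eta>)" if "lex_less \<omega> \<eta>" for \<omega> \<eta>
  proof -
    have "lex_less (prepend [True] \<omega>) (prepend [True] \<eta>)" using that by (simp add: lex_less_cons)
    then have "lex_less (pi_map f (prepend [True] \<omega>)) (pi_map f (prepend [True] \<eta>))" by (rule m)
    then show ?thesis by (simp add: pp lex_less_cons)
  qed
  then show ?thesis using qv by (simp add: QF_iff)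
qed

lemma rho_comp: assumes "f \<in> QF1" "g \<in> QF1" shows "rho (f \<circ> g) = rho f \<circ> rho g"
  using QF1_True[OF assms(1)] QF1_True[OF assms(2)] by (auto simp: rho_def fun_eq_iff)

lemma iso_QF1_QF: "rho \<in> iso (perm_grp QF1) (perm_grp QF)"
proof -
  have h: "rho \<in> hom (perm_grp QF1) (perm_grp QF)"
    by (auto simp: hom_def perm_grp_def rho_QF rho_comp)
  have "inj_on rho QF1" by (metis inj_onI phi_rho)
  moreover have "rho ` QF1 = QF"
  proof
    show "rho ` QF1 \<subseteq> QF" using rho_QF by auto
    show "QF \<subseteq> rho ` QF1" using phi_QF1 rho_phi by (metis image_eqI subsetI)
  qed
  ultimately show ?thesis using h by (simp add: iso_def bij_betw_def perm_grp_def)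
qed



abbreviation heq where "heq \<equiv> hnn_eq (perm_grp QF1) theta"

lemma carrier_pg[simp]: "carrier (perm_grp S) = S" by (simp add: perm_grp_def)
lemma mult_pg[simp]: "x \<otimes>\<^bsub>perm_grp S\<^esub> y = x \<circ> y" by (simp add: perm_grp_def)

definition evl :: "(bool list \<Rightarrow> bool list) option \<times> bool \<Rightarrow> (bool list \<Rightarrow> bool list)" where
  "evl x = (case x of (None, b) \<Rightarrow> (if b then ainv else alpha)
     | (Some f, b) \<Rightarrow> (if f \<in> QF1 then (if b then inv_into UNIV f else f) else id))"

fun evw :: "((bool list \<Rightarrow> bool list) option \<times> bool) list \<Rightarrow> (bool list \<Rightarrow> bool list)" where
  "evw [] = id"
| "evw (x # w) = evl x \<circ> evw w"

lemma evw_append: "evw (u @ v) = evw u \<circ> evw v"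
  by (induction u) (auto simp: comp_assoc)

lemma QF1_bij: "f \<in> QF1 \<Longrightarrow> bij f"
  by (simp add: QF1_iff QF_bij)

lemma heq_evw: "heq u v \<Longrightarrow> evw u = evw v"
proof (induction rule: hnn_eq.induct)
  case (cong u v x y) then show ?case by (simp add: evw_append)
next
  case (cancel g b)
  show ?case
  proof (cases g)
    case None then show ?thesis by (cases b) (auto simp: evl_def fun_eq_iff)
  next
    case (Some f)
    show ?thesis
    proof (cases "f \<in> QF1")
      case True
      then have "bij f" by (rule QF1_bij)
      then have "f \<circ> inv_into UNIV f = id" "inv_into UNIV f \<circ> f = id"
        by (meson bij_is_surj surj_iff, meson bij_is_inj inj_iff)
      then show ?thesis using Some True by (cases b) (auto simp: evl_def)
    qed (use Some in \<open>simp add: evl_def\<close>)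
  qed
next
  case (mult_rel h1 h2)
  then show ?case by (simp add: evl_def QF1_comp)
next
  case (hnn_rel h)
  then have "theta h \<in> QF1" using theta_QF1 by simp
  then show ?case using hnn_rel by (simp add: evl_def theta_eq comp_def)
qed auto




declare hnn_eq.trans[trans]

lemma heq_app: assumes "heq u u'" "heq v v'" shows "heq (u @ v) (u' @ v')"
proof -
  have "heq ([] @ u @ v) ([] @ u' @ v)" using assms(1) by (rule hnn_eq.cong)
  moreover have "heq (u' @ v @ []) (u' @ v' @ [])" using assms(2) by (rule hnn_eq.cong)
  ultimately show ?thesis by (simp add: hnn_eq.trans)
qed

lemma heq_ctx: "heq u v \<Longrightarrow> heq (x @ u @ y) (x @ v @ y)"
  by (rule hnn_eq.cong)

lemma heq_ctxE: "heq u v \<Longrightarrow> L = x @ u @ y \<Longrightarrow> R = x @ v @ y \<Longrightarrow> heq L R"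
  using hnn_eq.cong by blast

abbreviation "tt \<equiv> ((None :: (bool list \<Rightarrow> bool list) option), False)"
abbreviation "ti \<equiv> ((None :: (bool list \<Rightarrow> bool list) option), True)"
abbreviation ltr :: "(bool list \<Rightarrow> bool list) \<Rightarrow> _" where "ltr f \<equiv> (Some f, False)"

lemma R_tti: "heq [tt, ti] []" using hnn_eq.cancel[of _ _ None False] by simp
lemma R_itt: "heq [ti, tt] []" using hnn_eq.cancel[of _ _ None True] by simp

lemma R_id: "heq [ltr id] []"
proof -
  have m: "heq [ltr id, ltr id] [ltr id]" using hnn_eq.mult_rel[of id "perm_grp QF1" id theta]
    by (simp add: QF1_id)
  have c: "heq [ltr id, (Some id, True)] []" using hnn_eq.cancel[of _ _ "Some id" False] by simp
  have "heq [ltr id] [ltr id, ltr id, (Some id, True)]"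
    using heq_ctxE[OF c, of "[ltr id, ltr id, (Some id, True)]" "[ltr id]" "[]"]
    by (simp add: hnn_eq.sym)
  also have "heq \<dots> [ltr id, (Some id, True)]"
    using heq_ctxE[OF m, of _ "[]" "[(Some id, True)]"] by simp
  finally show ?thesis using c by (rule hnn_eq.trans)
qed

lemma R_inv: assumes "f \<in> QF1" shows "heq [(Some f, True)] [ltr (inv_into UNIV f)]"
proof -
  have fi: "f \<circ> inv_into UNIV f = id" using QF1_bij[OF assms] by (meson bij_is_surj surj_iff)
  have c: "heq [(Some f, True), ltr f] []" using hnn_eq.cancel[of _ _ "Some f" True] by simp
  have m: "heq [ltr f, ltr (inv_into UNIV f)] [ltr id]"
    using hnn_eq.mult_rel[of f "perm_grp QF1" "inv_into UNIV f" theta] assms QF1_inv fi by simp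
  have "heq [ltr (inv_into UNIV f)] [(Some f, True), ltr f, ltr (inv_into UNIV f)]"
    using heq_ctxE[OF c, of _ "[]" "[ltr (inv_into UNIV f)]"] by (simp add: hnn_eq.sym)
  also have "heq \<dots> [(Some f, True), ltr id]"
    using heq_ctxE[OF m, of _ "[(Some f, True)]" "[]"] by simp
  also have "heq \<dots> [(Some f, True)]"
    using heq_ctxE[OF R_id, of _ "[(Some f, True)]" "[]"] by simp
  finally show ?thesis by (rule hnn_eq.sym)
qed

lemma R3: assumes "f \<in> QF1" shows "heq [ltr f, tt] [tt, ltr (theta f)]"
proof -
  have h: "heq [ti, ltr f, tt] [ltr (theta f)]" using hnn_eq.hnn_rel[of f "perm_grp QF1" theta] assms by simp
  have "heq [tt, ltr (theta f)] [tt, ti, ltr f, tt]"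
    using heq_ctxE[OF h, of _ "[tt]" "[]"] by (simp add: hnn_eq.sym)
  also have "heq \<dots> [ltr f, tt]"
    using heq_ctxE[OF R_tti, of _ "[]" "[ltr f, tt]"] by simp
  finally show ?thesis by (rule hnn_eq.sym)
qed

lemma R4: assumes "f \<in> QF1" shows "heq [ti, ltr f] [ltr (theta f), ti]"
proof -
  have h: "heq [ti, ltr f, tt] [ltr (theta f)]" using hnn_eq.hnn_rel[of f "perm_grp QF1" theta] assms by simp
  have "heq [ltr (theta f), ti] [ti, ltr f, tt, ti]"
    using heq_ctxE[OF h, of _ "[]" "[ti]"] by (simp add: hnn_eq.sym)
  also have "heq \<dots> [ti, ltr f]"
    using heq_ctxE[OF R_tti, of _ "[ti, ltr f]" "[]"] by simp
  finally show ?thesis by (rule hnn_eq.sym)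
qed

lemma R3pow: "f \<in> QF1 \<Longrightarrow>
  heq (ltr f # replicate a tt) (replicate a tt @ [ltr ((theta ^^ a) f)])"
proof (induction a arbitrary: f)
  case 0 then show ?case by (simp add: hnn_eq.refl)
next
  case (Suc a)
  have "heq (ltr f # replicate (Suc a) tt) (tt # ltr (theta f) # replicate a tt)"
    using heq_ctxE[OF R3[OF Suc.prems], of _ "[]" "replicate a tt"] by simp
  also have "heq \<dots> (tt # replicate a tt @ [ltr ((theta ^^ a) (theta f))])"
    using heq_ctxE[OF Suc.IH[OF theta_QF1[OF Suc.prems]], of _ "[tt]" "[]"] by simp
  finally show ?case by (simp add: funpow_swap1 replicate_append_same)
qed




definition nf :: "nat \<Rightarrow> (bool list \<Rightarrow> bool list) \<Rightarrow> nat \<Rightarrow> _" where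
  "nf a h b = replicate a tt @ ltr h # replicate b ti"

lemma nf_mult: assumes "f \<in> QF1" "h \<in> QF1"
  shows "\<exists>h'. h' \<in> QF1 \<and> heq (ltr f # nf a h b) (nf a h' b)"
proof -
  have "heq (ltr f # nf a h b) (replicate a tt @ [ltr ((theta ^^ a) f)] @ ltr h # replicate b ti)"
    using heq_ctxE[OF R3pow[OF assms(1), of a], of _ "[]" "ltr h # replicate b ti"] by (simp add: nf_def)
  also have "heq \<dots> (replicate a tt @ [ltr ((theta ^^ a) f \<circ> h)] @ replicate b ti)"
    using heq_ctxE[OF hnn_eq.mult_rel[of "(theta ^^ a) f" "perm_grp QF1" h theta]]
      theta_pow_QF1[OF assms(1)] assms(2) by simp
  finally show ?thesis using QF1_comp[OF theta_pow_QF1[OF assms(1)] assms(2)]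
    by (auto simp: nf_def)
qed

lemma hnn_words_iff: "w \<in> hnn_words (perm_grp QF1) \<longleftrightarrow> (\<forall>(g, b) \<in> set w. g = None \<or> the g \<in> QF1)"
  by (simp add: hnn_words_def)

lemma nf_exists: "w \<in> hnn_words (perm_grp QF1) \<Longrightarrow> \<exists>a h b. h \<in> QF1 \<and> heq w (nf a h b)"
proof (induction w)
  case Nil
  have "heq [] (nf 0 id 0)" using R_id by (simp add: nf_def hnn_eq.sym)
  then show ?case using QF1_id by blast
next
  case (Cons x w)
  obtain g c where x: "x = (g, c)" by fastforce
  have w: "w \<in> hnn_words (perm_grp QF1)" and gx: "g = None \<or> the g \<in> QF1"
    using Cons.prems x by (auto simp: hnn_words_iff)
  obtain a h b where h: "h \<in> QF1" "heq w (nf a h b)" using Cons.IH[OF w] by blast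
  have s1: "heq (x # w) (x # nf a h b)" using heq_ctxE[OF h(2), of _ "[x]" "[]"] by simp
  have "\<exists>a' h' b'. h' \<in> QF1 \<and> heq (x # nf a h b) (nf a' h' b')"
  proof (cases g)
    case None
    show ?thesis
    proof (cases c)
      case False
      then have "x # nf a h b = nf (Suc a) h b" using None x by (simp add: nf_def)
      then have "heq (x # nf a h b) (nf (Suc a) h b)" using hnn_eq.refl by metis
      then show ?thesis using h(1) by blast
    next
      case True
      show ?thesis
      proof (cases a)
        case 0
        have "heq (x # nf a h b) (nf 0 (theta h) (Suc b))"
          using heq_ctxE[OF R4[OF h(1)], of _ "[]" "replicate b ti"] 0 None True x
          by (simp add: nf_def)
        then show ?thesis using theta_QF1[OF h(1)] by blast
      next
        case (Suc a')
        have "heq (x # nf a h b) (nf a' h b)"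
          using heq_ctxE[OF R_itt, of _ "[]" "nf a' h b"] Suc None True x
          by (simp add: nf_def)
        then show ?thesis using h(1) by blast
      qed
    qed
  next
    case (Some f)
    then have f: "f \<in> QF1" using gx by simp
    show ?thesis
    proof (cases c)
      case False
      then have "x = ltr f" using Some x by simp
      then show ?thesis using nf_mult[OF f h(1)] by blast
    next
      case True
      have e1: "heq (x # nf a h b) (ltr (inv_into UNIV f) # nf a h b)"
        using heq_ctxE[OF R_inv[OF f], of _ "[]" "nf a h b"] Some True x by simp
      obtain h' where "h' \<in> QF1" and e2: "heq (ltr (inv_into UNIV f) # nf a h b) (nf a h' b)"
        using nf_mult[OF QF1_inv[OF f] h(1)] by blast
      from e1 e2 have "heq (x # nf a h b) (nf a h' b)" by (rule hnn_eq.trans)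
      then show ?thesis using \<open>h' \<in> QF1\<close> by blast
    qed
  qed
  then obtain a' h' b' where "h' \<in> QF1" and e3: "heq (x # nf a h b) (nf a' h' b')" by blast
  from s1 e3 have "heq (x # w) (nf a' h' b')" by (rule hnn_eq.trans)
  then show ?case using \<open>h' \<in> QF1\<close> by blast
qed



lemma ainv_alpha_pow[simp]: "(ainv ^^ n) ((alpha ^^ n) x) = x"
  by (induction n arbitrary: x) (simp_all add: funpow_swap1)

lemma alpha_ainv_pow[simp]: "(alpha ^^ n) ((ainv ^^ n) x) = x"
  by (induction n arbitrary: x) (simp_all add: funpow_swap1)

lemma alpha_repF_non1: "non1 w \<Longrightarrow> alpha (replicate n False @ w) = replicate (Suc n) False @ w"
  by (cases n; cases w rule: list_bool_cases) auto

lemma non1_repF: "non1 w \<Longrightarrow> non1 (replicate n False @ w)"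
  by (cases n) auto

lemma alpha_pow_non1: "non1 w \<Longrightarrow> (alpha ^^ n) w = replicate n False @ w"
  by (induction n) (simp_all add: alpha_repF_non1)

lemma ainv_F_non1: "non1 x \<Longrightarrow> ainv (False # x) = x"
  by (cases x rule: list_bool_cases) auto

lemma ainv_pow_non1: "non1 w \<Longrightarrow> (ainv ^^ n) (replicate n False @ w) = w"
proof (induction n)
  case (Suc n)
  have "(ainv ^^ Suc n) (replicate (Suc n) False @ w) = (ainv ^^ n) (ainv (False # replicate n False @ w))"
    by (simp add: funpow_swap1)
  also have "\<dots> = (ainv ^^ n) (replicate n False @ w)"
    using ainv_F_non1[OF non1_repF[OF Suc.prems]] by simp
  finally show ?case using Suc by simp
qed simp

lemma alpha_pow_Nil: "(alpha ^^ n) [] = replicate n False"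
  using alpha_pow_non1[of "[]" n] by simp

lemma evw_rep_tt: "evw (replicate a tt) = alpha ^^ a"
  by (induction a) (auto simp: evl_def)

lemma evw_rep_ti: "evw (replicate a ti) = ainv ^^ a"
  by (induction a) (auto simp: evl_def)

lemma evw_nf: "h \<in> QF1 \<Longrightarrow> evw (nf a h b) = (alpha ^^ a) \<circ> h \<circ> (ainv ^^ b)"
  by (simp add: nf_def evw_append evw_rep_tt evw_rep_ti evl_def comp_assoc)

lemma heq_tt_ti: "heq (replicate a tt @ replicate a ti) []"
proof (induction a)
  case 0 then show ?case by (simp add: hnn_eq.refl)
next
  case (Suc a)
  have "heq (replicate (Suc a) tt @ replicate (Suc a) ti) ([tt] @ (replicate a tt @ replicate a ti) @ [ti])"
    by (simp add: hnn_eq.refl replicate_append_same)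
  also have "heq \<dots> ([tt] @ [] @ [ti])" using Suc by (rule hnn_eq.cong)
  also have "heq \<dots> []" using R_tti by simp
  finally show ?case .
qed

lemma nf_trivial: assumes h: "h \<in> QF1" and e: "evw (nf a h b) = id" shows "heq (nf a h b) []"
proof -
  have e': "(alpha ^^ a) (h ((ainv ^^ b) x)) = x" for x
    using fun_cong[OF e, of x] evw_nf[OF h] by simp
  have h0: "h [] = []" using h by (simp add: QF1_iff)
  have "(alpha ^^ a) [] = (alpha ^^ b) []"
    using e'[of "(alpha ^^ b) []"] h0 by simp
  then have ab: "a = b" by (simp add: alpha_pow_Nil)
  have "h z = z" for z
  proof -
    have "(alpha ^^ a) (h z) = (alpha ^^ a) z" using e'[of "(alpha ^^ a) z"] ab by simp
    then have "(ainv ^^ a) ((alpha ^^ a) (h z)) = (ainv ^^ a) ((alpha ^^ a) z)" by simp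
    then show ?thesis by simp
  qed
  then have hid: "h = id" by auto
  have "heq (nf a h b) (replicate a tt @ [ltr id] @ replicate a ti)"
    by (simp add: nf_def hid ab hnn_eq.refl)
  also have "heq \<dots> (replicate a tt @ [] @ replicate a ti)" using R_id by (rule hnn_eq.cong)
  also have "heq \<dots> []" using heq_tt_ti by simp
  finally show ?thesis .
qed

definition winv :: "((bool list \<Rightarrow> bool list) option \<times> bool) list \<Rightarrow> _" where
  "winv w = rev (map (\<lambda>(g, b). (g, \<not> b)) w)"

lemma winv_winv[simp]: "winv (winv w) = w"
  by (simp add: winv_def rev_map comp_def case_prod_beta)

lemma winv_Cons: "winv (x # w) = winv w @ [(fst x, \<not> snd x)]"
  by (simp add: winv_def case_prod_beta)

lemma heq_winv: "heq (w @ winv w) []"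
proof (induction w)
  case Nil then show ?case by (simp add: winv_def hnn_eq.refl)
next
  case (Cons x w)
  obtain g b where x: "x = (g, b)" by fastforce
  have "heq ((x # w) @ winv (x # w)) ([x] @ (w @ winv w) @ [(g, \<not> b)])"
    by (simp add: winv_Cons x hnn_eq.refl)
  also have "heq \<dots> ([x] @ [] @ [(g, \<not> b)])" using Cons by (rule hnn_eq.cong)
  also have "heq \<dots> []" using hnn_eq.cancel[of _ _ g b] x by simp
  finally show ?case .
qed

lemma winv_words: "w \<in> hnn_words (perm_grp QF1) \<Longrightarrow> winv w \<in> hnn_words (perm_grp QF1)"
  by (auto simp: hnn_words_iff winv_def)

definition cls where "cls w = {v. heq w v}"

lemma cls_eq: "heq u v \<Longrightarrow> cls u = cls v"
  unfolding cls_def using hnn_eq.trans hnn_eq.sym by blast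

lemma carrier_HNN: "carrier (HNN (perm_grp QF1) theta) = cls ` hnn_words (perm_grp QF1)"
  by (auto simp: HNN_def cls_def)

lemma mult_HNN: "cls x \<otimes>\<^bsub>HNN (perm_grp QF1) theta\<^esub> cls y = cls (x @ y)"
proof -
  have "{v. \<exists>x'\<in>cls x. \<exists>y'\<in>cls y. heq (x' @ y') v} = cls (x @ y)"
  proof
    show "{v. \<exists>x'\<in>cls x. \<exists>y'\<in>cls y. heq (x' @ y') v} \<subseteq> cls (x @ y)"
    proof
      fix v assume "v \<in> {v. \<exists>x'\<in>cls x. \<exists>y'\<in>cls y. heq (x' @ y') v}"
      then obtain x' y' where "heq x x'" "heq y y'" "heq (x' @ y') v" by (auto simp: cls_def)
      then have "heq (x @ y) (x' @ y')" by (simp add: heq_app)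
      with \<open>heq (x' @ y') v\<close> have "heq (x @ y) v" using hnn_eq.trans by blast
      then show "v \<in> cls (x @ y)" by (simp add: cls_def)
    qed
    show "cls (x @ y) \<subseteq> {v. \<exists>x'\<in>cls x. \<exists>y'\<in>cls y. heq (x' @ y') v}"
      by (auto simp: cls_def intro: hnn_eq.refl)
  qed
  then show ?thesis by (simp add: HNN_def)
qed

definition psi where "psi C = evw (SOME v. v \<in> C)"

lemma psi_cls: "psi (cls w) = evw w"
proof -
  have "w \<in> cls w" by (simp add: cls_def hnn_eq.refl)
  then have "(SOME v. v \<in> cls w) \<in> cls w" by (rule someI)
  then have "heq w (SOME v. v \<in> cls w)" by (simp add: cls_def)
  then show ?thesis unfolding psi_def using heq_evw by metis
qed

lemma evl_QF: "(g, b) \<in> set w \<Longrightarrow> w \<in> hnn_words (perm_grp QF1) \<Longrightarrow> evl (g, b) \<in> QF"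
  by (cases g) (auto simp: evl_def hnn_words_iff ainv_QF alpha_QF QF1_iff QF_inv QF_id dest: bspec)

lemma evw_QF: "w \<in> hnn_words (perm_grp QF1) \<Longrightarrow> evw w \<in> QF"
proof (induction w)
  case Nil then show ?case using QF_id by (simp add: id_def)
next
  case (Cons x w)
  have w: "w \<in> hnn_words (perm_grp QF1)" using Cons.prems by (simp add: hnn_words_iff)
  obtain g b where x: "x = (g, b)" by fastforce
  have "evl x \<in> QF" using evl_QF[of g b "x # w"] Cons.prems x by simp
  from QF_comp[OF this Cons.IH[OF w]] show ?case by (simp only: evw.simps)
qed

section \<open>Every element of QF has normal form\<close>

lemma Z_fix: assumes "g \<in> QF" shows "pi_map g (\<lambda>_. False) = (\<lambda>_. False)"
proof -
  let ?Z = "\<lambda>_::nat. False"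
  let ?\<zeta> = "pi_map (inv_into UNIV g) ?Z"
  have q: "g \<in> QV" "inv_into UNIV g \<in> QV" using assms QF_inv by (auto simp: QF_iff)
  have "g \<circ> inv_into UNIV g = id" using QF_bij[OF assms] by (meson bij_is_surj surj_iff)
  then have pz: "pi_map g ?\<zeta> = ?Z" using pi_comp[OF q, of ?Z] by (simp add: pi_id)
  have nz: "\<not> lex_less \<omega> ?Z" for \<omega> by (simp add: lex_less_def)
  have "?\<zeta> = ?Z"
  proof (rule ccontr)
    assume "?\<zeta> \<noteq> ?Z"
    then have "lex_less ?Z ?\<zeta>" using lex_total nz by blast
    then have "lex_less (pi_map g ?Z) (pi_map g ?\<zeta>)" using assms by (simp add: QF_iff)
    then show False using pz nz by simp
  qed
  then show ?thesis using pz by simp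
qed

lemma prepend_repF_Z: "prepend (replicate n False) (\<lambda>_. False) = (\<lambda>_. False)"
  by (auto simp: prepend_def fun_eq_iff)

lemma prepend_Z_rep: assumes "prepend w (\<lambda>_. False) = (\<lambda>_. False)"
  shows "w = replicate (length w) False"
proof (rule nth_equalityI)
  fix i assume "i < length w"
  then show "w ! i = replicate (length w) False ! i"
    using fun_cong[OF assms, of i] by (simp add: prepend_def)
qed simp

lemma QF_nf: assumes g: "g \<in> QF"
  shows "\<exists>a h b. h \<in> QF1 \<and> g = (alpha ^^ a) \<circ> h \<circ> (ainv ^^ b)"
proof -
  have "g \<in> QV" using g by (simp add: QF_iff)
  then obtain N where N: "\<forall>l. N \<le> length l \<longrightarrow> rigid g l" using QV_bound by blast
  let ?l = "replicate N False"
  have r: "rigid g ?l" using N by simp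
  have "prepend (g ?l) (\<lambda>_. False) = (\<lambda>_. False)"
    using pi_map_rigid[OF r, of "\<lambda>_. False"] Z_fix[OF g] prepend_repF_Z by metis
  then obtain a where ga: "g ?l = replicate a False" using prepend_Z_rep by blast
  define h where "h = (ainv ^^ a) \<circ> g \<circ> (alpha ^^ N)"
  have hq: "h \<in> QF" unfolding h_def using g by (simp add: QF_comp alpha_pow_QF ainv_pow_QF)
  have "h w = w" if "non1 w" for w
  proof -
    have "g (?l @ w) = replicate a False @ w" using r ga by (simp add: rigid_def)
    then show ?thesis using that by (simp add: h_def alpha_pow_non1 ainv_pow_non1)
  qed
  then have h1: "h \<in> QF1" using hq by (simp add: QF1_iff)
  have "g = (alpha ^^ a) \<circ> h \<circ> (ainv ^^ N)" by (simp add: h_def fun_eq_iff)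
  then show ?thesis using h1 by blast
qed

section \<open>The isomorphism\<close>

lemma nf_words: "h \<in> QF1 \<Longrightarrow> nf a h b \<in> hnn_words (perm_grp QF1)"
  by (auto simp: nf_def hnn_words_iff)

lemma psi_iso: "psi \<in> iso (HNN (perm_grp QF1) theta) (perm_grp QF)"
proof -
  have hom: "psi \<in> hom (HNN (perm_grp QF1) theta) (perm_grp QF)"
    by (auto simp: hom_def carrier_HNN mult_HNN psi_cls evw_QF evw_append)
  have inj: "inj_on psi (carrier (HNN (perm_grp QF1) theta))"
  proof (rule inj_onI)
    fix A B assume A: "A \<in> carrier (HNN (perm_grp QF1) theta)" and B: "B \<in> carrier (HNN (perm_grp QF1) theta)"
      and e: "psi A = psi B"
    obtain u where u: "u \<in> hnn_words (perm_grp QF1)" "A = cls u" using A by (auto simp: carrier_HNN)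
    obtain v where v: "v \<in> hnn_words (perm_grp QF1)" "B = cls v" using B by (auto simp: carrier_HNN)
    have euv: "evw u = evw v" using e u v by (simp add: psi_cls)
    have w: "u @ winv v \<in> hnn_words (perm_grp QF1)"
      using u(1) winv_words[OF v(1)] by (auto simp: hnn_words_iff)
    obtain a h b where h: "h \<in> QF1" "heq (u @ winv v) (nf a h b)" using nf_exists[OF w] by blast
    have "evw (u @ winv v) = evw (v @ winv v)" by (simp add: evw_append euv)
    also have "\<dots> = id" using heq_evw[OF heq_winv[of v]] by simp
    finally have "evw (nf a h b) = id" using heq_evw[OF h(2)] by simp
    then have "heq (nf a h b) []" using nf_trivial h(1) by blast
    with h(2) have uv: "heq (u @ winv v) []" by (rule hnn_eq.trans)
    have vv: "heq (winv v @ v) []" using heq_winv[of "winv v"] by simp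
    have "heq u (u @ winv v @ v)" using hnn_eq.cong[OF vv, of u "[]"] hnn_eq.sym by simp
    also have "heq (u @ winv v @ v) ([] @ [] @ v)"
      using hnn_eq.cong[OF uv, of "[]" v] by simp
    finally have "heq u v" by simp
    then show "A = B" using u v cls_eq by simp
  qed
  have surj: "psi ` carrier (HNN (perm_grp QF1) theta) = QF"
  proof
    show "psi ` carrier (HNN (perm_grp QF1) theta) \<subseteq> QF"
      by (auto simp: carrier_HNN psi_cls evw_QF)
    show "QF \<subseteq> psi ` carrier (HNN (perm_grp QF1) theta)"
    proof
      fix g assume "g \<in> QF"
      then obtain a h b where h: "h \<in> QF1" "g = (alpha ^^ a) \<circ> h \<circ> (ainv ^^ b)" using QF_nf by blast
      have "psi (cls (nf a h b)) = g" using h by (simp add: psi_cls evw_nf)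
      moreover have "cls (nf a h b) \<in> carrier (HNN (perm_grp QF1) theta)"
        using nf_words[OF h(1)] by (simp add: carrier_HNN)
      ultimately show "g \<in> psi ` carrier (HNN (perm_grp QF1) theta)" by force
    qed
  qed
  show ?thesis using hom inj surj by (simp add: iso_def bij_betw_def)
qed

lemma iso_inv_closed:
  assumes h: "h \<in> iso G H" and cl: "\<forall>x\<in>carrier G. \<forall>y\<in>carrier G. x \<otimes>\<^bsub>G\<^esub> y \<in> carrier G"
  shows "inv_into (carrier G) h \<in> iso H G"
proof -
  have b: "bij_betw h (carrier G) (carrier H)" and hh: "h \<in> hom G H" using h by (auto simp: iso_def)
  have bi: "bij_betw (inv_into (carrier G) h) (carrier H) (carrier G)" by (rule bij_betw_inv_into[OF b])
  have "inv_into (carrier G) h (x \<otimes>\<^bsub>H\<^esub> y) = inv_into (carrier G) h x \<otimes>\<^bsub>G\<^esub> inv_into (carrier G) h y"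
    if x: "x \<in> carrier H" and y: "y \<in> carrier H" for x y
  proof -
    let ?a = "inv_into (carrier G) h x" and ?b = "inv_into (carrier G) h y"
    have a: "?a \<in> carrier G" "h ?a = x" using b x
      by (auto simp: bij_betw_def intro: inv_into_into f_inv_into_f)
    have bb: "?b \<in> carrier G" "h ?b = y" using b y
      by (auto simp: bij_betw_def intro: inv_into_into f_inv_into_f)
    have "h (?a \<otimes>\<^bsub>G\<^esub> ?b) = x \<otimes>\<^bsub>H\<^esub> y" using hh a bb by (simp add: hom_def)
    moreover have "?a \<otimes>\<^bsub>G\<^esub> ?b \<in> carrier G" using cl a bb by blast
    ultimately show ?thesis using b by (metis bij_betw_def inv_into_f_f)
  qed
  then have "inv_into (carrier G) h \<in> hom H G" using bi by (auto simp: hom_def bij_betw_def)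
  then show ?thesis using bi by (simp add: iso_def)
qed

theorem lemma2p7:
  shows "perm_grp QF1 \<cong> perm_grp QF
       \<and> theta \<in> hom (perm_grp QF1) (perm_grp QF1)
       \<and> inj_on theta QF1
       \<and> perm_grp QF \<cong> HNN (perm_grp QF1) theta"
proof (intro conjI)
  show "perm_grp QF1 \<cong> perm_grp QF" using iso_QF1_QF by (rule is_isoI)
  show "theta \<in> hom (perm_grp QF1) (perm_grp QF1)"
    by (auto simp: hom_def theta_QF1 theta_comp)
  show "inj_on theta QF1" using theta_inj by (simp add: inj_on_def inj_def)
  have cl: "\<forall>x\<in>carrier (HNN (perm_grp QF1) theta). \<forall>y\<in>carrier (HNN (perm_grp QF1) theta).
      x \<otimes>\<^bsub>HNN (perm_grp QF1) theta\<^esub> y \<in> carrier (HNN (perm_grp QF1) theta)"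
  proof (intro ballI)
    fix A B assume "A \<in> carrier (HNN (perm_grp QF1) theta)" "B \<in> carrier (HNN (perm_grp QF1) theta)"
    then obtain u v where u: "u \<in> hnn_words (perm_grp QF1)" "A = cls u"
      and v: "v \<in> hnn_words (perm_grp QF1)" "B = cls v" by (auto simp: carrier_HNN)
    have "u @ v \<in> hnn_words (perm_grp QF1)" using u v by (auto simp: hnn_words_iff)
    then show "A \<otimes>\<^bsub>HNN (perm_grp QF1) theta\<^esub> B \<in> carrier (HNN (perm_grp QF1) theta)"
      using u v by (simp add: carrier_HNN mult_HNN)
  qed
  show "perm_grp QF \<cong> HNN (perm_grp QF1) theta"
    using iso_inv_closed[OF psi_iso cl] by (rule is_isoI)
qed



end
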